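(* Let $A=(-1,0)$ and $B=(1,0)$. For $x$ on the origin-centered circle of radius $r>1$, let $P^2(x)$ be defined by two steps. First, $y$ is the second intersection point of the line $xA$ with this circle. Then $P^2(x)$ is the second intersection point of the line $yB$ with this circle. Let $Y$ be the vector field on $\mathbb{R}^2\setminus\{0\}$ given in polar coordinates $(\alpha,r)$ by $$Y=-\frac{4\sin\alpha}{r}\,\frac{\partial}{\partial\alpha}.$$ Then, uniformly in $x$ with $|x|=r$, as $r\to\infty$, $$|P^2(x)-x-Y(x)|=O\Big(\frac{1}{r}\Big).$$
   Context: The vector $\partial/\partial\alpha$ at a point at distance $r$ from the origin has Euclidean length $r$. Hence $Y$ is tangent to origin-centered circles and has length $4|\sin\alpha|$. $O(1/r)$ as $r\to\infty$ means bounded in absolute value by $C/r$ for all $r\ge R$, for some constants $C$ and $R$. *)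

theory Defs
  imports "HOL-Analysis.Analysis"
begin

definition ptA :: complex where "ptA = -1"
definition ptB :: complex where "ptB = 1"

definition second_inter :: "complex \<Rightarrow> complex \<Rightarrow> complex" where
  "second_inter p x = (THE y. cmod y = cmod x \<and> y \<noteq> x \<and> collinear {x, p, y})"

definition P2 :: "complex \<Rightarrow> complex" where
  "P2 x = second_inter ptB (second_inter ptA x)"

text \<open>In polar coordinates (alpha, r), the coordinate vector d/d alpha at x is i*x
(derivative of r*cis alpha in alpha). Y = -(4 sin alpha / r) d/d alpha.\<close>
definition d_alpha :: "complex \<Rightarrow> complex" where
  "d_alpha x = \<i> * x"

definition Yfield :: "complex \<Rightarrow> complex" where
  "Yfield x = of_real (- 4 * sin (Arg x) / cmod x) * d_alpha x"

end

theory Submission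
  imports Defs
begin

lemma si:
  fixes a :: real and x :: complex
  assumes ax: "\<bar>a\<bar> < cmod x"
  shows "second_inter (of_real a) x =
    of_real a + of_real ((a^2 - (cmod x)^2) / (cmod (x - of_real a))^2) * (x - of_real a)"
    and "cmod (second_inter (of_real a) x) = cmod x"
proof -
  define D where "D = (Re x - a)^2 + (Im x)^2"
  define t0 where "t0 = (a^2 - (Re x)^2 - (Im x)^2) / D"
  have xa: "x \<noteq> of_real a" using ax by auto
  have Dpos: "D > 0" unfolding D_def using xa
  proof -
    have "Re x \<noteq> a \<or> Im x \<noteq> 0" using xa by (auto simp: complex_eq_iff)
    then show "(Re x - a)^2 + (Im x)^2 > 0" by (auto simp: sum_power2_gt_zero_iff)
  qed
  have cm: "(cmod (x - of_real a))^2 = D" unfolding D_def by (simp add: cmod_power2)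
  have cx: "(cmod x)^2 = (Re x)^2 + (Im x)^2" by (simp add: cmod_power2)
  have "\<bar>a\<bar>^2 < (cmod x)^2" using ax by (intro power_strict_mono) auto
  then have r2: "(Re x)^2 + (Im x)^2 > a^2" using cx by simp
  have t0neg: "t0 < 0" unfolding t0_def using Dpos r2 by (simp add: divide_neg_pos)
  have t0D: "t0 * D = a^2 - (Re x)^2 - (Im x)^2" unfolding t0_def using Dpos by simp
  define y0 where "y0 = of_real a + of_real t0 * (x - of_real a)"
  have key: "\<And>u. (a + u*(Re x - a))^2 + (u * Im x)^2 = (Re x)^2 + (Im x)^2 \<Longrightarrow> u \<noteq> 1 \<Longrightarrow> u = t0"
  proof -
    fix u assume h: "(a + u*(Re x - a))^2 + (u * Im x)^2 = (Re x)^2 + (Im x)^2" and u1: "u \<noteq> 1"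
    have "(u - 1) * (u * D - (a^2 - (Re x)^2 - (Im x)^2)) = 0"
      using h unfolding D_def by (simp add: algebra_simps power2_eq_square)
    then have "u * D = t0 * D" using u1 t0D by simp
    then show "u = t0" using Dpos by simp
  qed
  have P: "cmod y0 = cmod x \<and> y0 \<noteq> x \<and> collinear {x, of_real a, y0}"
  proof (intro conjI)
    have "(cmod y0)^2 = (a + t0*(Re x - a))^2 + (t0 * Im x)^2" unfolding y0_def by (simp add: cmod_power2)
    also have "\<dots> = a^2 + t0 * (2*a*(Re x - a)) + t0 * (t0 * D)" unfolding D_def by (simp add: algebra_simps power2_eq_square)
    also have "\<dots> = a^2 + t0 * (2*a*(Re x - a) + (a^2 - (Re x)^2 - (Im x)^2))" unfolding t0D by (simp add: algebra_simps)
    also have "\<dots> = a^2 - t0 * D" unfolding D_def by (simp add: algebra_simps power2_eq_square)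
    also have "\<dots> = (cmod x)^2" unfolding t0D cx by simp
    finally show "cmod y0 = cmod x" by (simp add: power2_eq_iff_nonneg)
    show "y0 \<noteq> x"
    proof
      assume "y0 = x"
      then have "(of_real t0 - 1) * (x - of_real a) = 0" unfolding y0_def by (simp add: algebra_simps)
      then show False using xa t0neg by auto
    qed
    have "y0 = t0 *\<^sub>R x + (1 - t0) *\<^sub>R of_real a" unfolding y0_def by (simp add: scaleR_conv_of_real algebra_simps)
    then have "collinear {x, y0, of_real a}" unfolding collinear_3_expand by blast
    then show "collinear {x, of_real a, y0}" by (simp add: insert_commute)
  qed
  have U: "y = y0" if hy: "cmod y = cmod x \<and> y \<noteq> x \<and> collinear {x, of_real a, y}" for y
  proof -
    have "collinear {x, y, of_real a}" using hy by (simp add: insert_commute)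
    then obtain u where yu: "y = u *\<^sub>R x + (1 - u) *\<^sub>R of_real a" using xa unfolding collinear_3_expand by blast
    have u1: "u \<noteq> 1" using yu hy by auto
    have ry: "Re y = a + u*(Re x - a)" "Im y = u * Im x" unfolding yu by (simp_all add: algebra_simps)
    have "(Re y)^2 + (Im y)^2 = (Re x)^2 + (Im x)^2" using hy by (metis cmod_power2)
    then have "u = t0" using key u1 ry by simp
    then show ?thesis unfolding y0_def using yu by (simp add: scaleR_conv_of_real algebra_simps)
  qed
  have eq: "second_inter (of_real a) x = y0"
    unfolding second_inter_def using P U by (rule the_equality)
  then show "second_inter (of_real a) x =
    of_real a + of_real ((a^2 - (cmod x)^2) / (cmod (x - of_real a))^2) * (x - of_real a)"
    unfolding y0_def t0_def cm cx by simp
  show "cmod (second_inter (of_real a) x) = cmod x" using eq P by simp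
qed

lemma si_alg:
  fixes a :: real and x :: complex
  assumes ax: "\<bar>a\<bar> < cmod x"
  shows "second_inter (of_real a) x = of_real a + (of_real (a^2) - x * cnj x) / (cnj x - of_real a)"
proof -
  have ne: "x - of_real a \<noteq> 0" using ax by auto
  have ne2: "cnj x - of_real a \<noteq> 0" using ne by (metis complex_cnj_complex_of_real complex_cnj_diff complex_cnj_zero_iff)
  have N: "complex_of_real ((cmod (x - of_real a))^2) = (x - of_real a) * (cnj x - of_real a)"
    by (subst complex_norm_square) simp
  have X: "complex_of_real ((cmod x)^2) = x * cnj x" by (subst complex_norm_square) simp
  have "complex_of_real ((a^2 - (cmod x)^2) / (cmod (x - of_real a))^2) * (x - of_real a)
     = (of_real (a^2) - x * cnj x) / ((x - of_real a) * (cnj x - of_real a)) * (x - of_real a)"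
    by (simp only: of_real_divide of_real_diff N X)
  also have "\<dots> = (of_real (a^2) - x * cnj x) / (cnj x - of_real a)" using ne ne2 by (simp add: divide_simps)
  finally show ?thesis using si(1)[OF ax] by simp
qed

lemma sinArg: "x \<noteq> 0 \<Longrightarrow> cmod x * sin (Arg x) = Im x"
  using Arg_eq [of x] by (metis Im_exp exp_Ln norm_exp_eq_Re Arg_def)

lemma main_bound:
  fixes x :: complex and r :: real
  assumes r5: "r \<ge> 5" and xr: "cmod x = r"
  shows "cmod (P2 x - x - Yfield x) \<le> 24 / r"
proof -
  define R where "R = complex_of_real (r^2)"
  define y where "y = second_inter ptA x"
  have x0: "x \<noteq> 0" using xr r5 by auto
  have xc: "x * cnj x = R" unfolding R_def using xr by (metis complex_norm_square)
  have R0: "R \<noteq> 0" unfolding R_def using r5 by simp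
  have cR: "cnj x = R / x" using xc x0 by (simp add: field_simps)
  have A: "\<bar>-1::real\<bar> < cmod x" using xr r5 by simp
  have ptA': "ptA = of_real (-1)" unfolding ptA_def by simp
  have ptB': "ptB = of_real 1" unfolding ptB_def by simp
  have yr: "cmod y = r" unfolding y_def ptA' using si(2)[OF A] xr by simp
  have x1: "x + 1 \<noteq> 0"
  proof
    assume "x + 1 = 0" then have "x = -1" by (simp add: eq_neg_iff_add_eq_0)
    then show False using xr r5 by simp
  qed
  have cr: "cmod R = r^2" unfolding R_def using r5 by (simp only: norm_of_real) simp
  have Rx: "R + x \<noteq> 0"
  proof
    assume "R + x = 0" then have "R = - x" by (simp add: eq_neg_iff_add_eq_0)
    then have "r^2 = r" using cr xr by simp
    then show False using r5 by (simp add: power2_eq_square)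
  qed
  have cx1: "cnj x + 1 \<noteq> 0"
  proof
    assume "cnj x + 1 = 0" then have "cnj x = -1" by (simp add: eq_neg_iff_add_eq_0)
    then have "x = -1" by (metis complex_cnj_cnj complex_cnj_minus complex_cnj_one)
    then show False using x1 by simp
  qed
  have yform: "y = - R * (1 + x) / (R + x)"
  proof -
    have "y = of_real (-1) + (of_real ((-1)^2) - x * cnj x) / (cnj x - of_real (-1))"
      unfolding y_def ptA' by (rule si_alg[OF A])
    also have "\<dots> = -1 + (1 - R) / (R / x + 1)" using xc cR by simp
    also have "\<dots> = - R * (1 + x) / (R + x)" using x0 Rx by (simp add: field_simps)
    finally show ?thesis .
  qed
  have cnjR: "cnj R = R" unfolding R_def by simp
  have cy: "cnj y = - (x + R) / (x + 1)"
  proof -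
    have "cnj y = - R * (1 + R / x) / (R + R / x)" unfolding yform by (simp add: cnjR cR)
    also have "\<dots> = - R * ((x + R) / x) / (R * (x + 1) / x)" using x0 by (simp add: field_simps)
    also have "\<dots> = - (x + R) / (x + 1)" using x0 x1 R0 by (simp add: divide_simps)
    finally show ?thesis .
  qed
  have yc: "y * cnj y = R" unfolding R_def using yr by (metis complex_norm_square)
  have B: "\<bar>1::real\<bar> < cmod y" using yr r5 by simp
  have n21: "cmod (2*x + 1) \<le> 2*r + 1"
    using norm_triangle_ineq[of "2*x" 1] xr by (simp add: norm_mult)
  have n21': "cmod (2*x + 1) \<le> 3*r" using n21 r5 by simp
  have "cmod R \<le> cmod (R + 2*x + 1) + cmod (2*x + 1)"
    using norm_triangle_ineq4[of "R + 2*x + 1" "2*x+1"] by simp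
  moreover have "r*r \<ge> 5*r" using r5 by (intro mult_right_mono) auto
  moreover have "cmod R = r * r" using cr by (simp add: power2_eq_square)
  ultimately have dlow: "cmod (R + 2*x + 1) \<ge> r^2/2" using n21 r5 unfolding power2_eq_square by linarith
  have dpos: "r^2/2 > 0" using r5 by simp
  have D0: "R + 2*x + 1 \<noteq> 0" using dlow dpos by auto
  have D0': "- R - 2 * x \<noteq> 1"
  proof
    assume "- R - 2 * x = 1" then have "R + 2*x + 1 = 0" by (simp add: algebra_simps eq_neg_iff_add_eq_0[symmetric])
    then show False using D0 by simp
  qed
  have e1: "- (x + R) / (x + 1) - 1 = - (R + 2*x + 1) / (x + 1)" using x1 by (simp add: field_simps)
  have e2: "1 + (1 - R) / (- (R + 2*x + 1) / (x + 1)) = 1 - (1 - R) * (x + 1) / (R + 2*x + 1)"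
    using x1 D0 D0' by (simp add: divide_simps, algebra)
  have zform: "P2 x = 1 - (1 - R) * (x + 1) / (R + 2*x + 1)"
  proof -
    have "P2 x = of_real 1 + (of_real (1^2) - y * cnj y) / (cnj y - of_real 1)"
      unfolding P2_def y_def[symmetric] ptB' by (rule si_alg[OF B])
    also have "\<dots> = 1 + (1 - R) / (- (x + R) / (x + 1) - 1)" using yc cy by simp
    also have "\<dots> = 1 - (1 - R) * (x + 1) / (R + 2*x + 1)" unfolding e1 e2 ..
    finally show ?thesis .
  qed
  have imx: "complex_of_real (Im x) = (x - cnj x) / (2 * \<i>)" by (simp add: complex_eq_iff)
  have Yform: "Yfield x = - 2 * (x^2 - R) / R"
  proof -
    have s: "sin (Arg x) = Im x / r" using sinArg[OF x0] xr r5 by (simp add: field_simps)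
    have "Yfield x = complex_of_real (- 4 * (Im x / r) / r) * (\<i> * x)"
      unfolding Yfield_def d_alpha_def s xr ..
    also have "\<dots> = - 4 * complex_of_real (Im x) / R * (\<i> * x)"
      unfolding R_def by (simp add: power2_eq_square)
    also have "\<dots> = - 2 * (x^2 - R) / R" unfolding imx cR using x0 R0 by (simp add: field_simps power2_eq_square)
    finally show ?thesis .
  qed
  have E: "P2 x - x - Yfield x = - 2 * (R - x^2) * (2*x + 1) / (R * (R + 2*x + 1))"
    unfolding zform Yform using R0 D0 by (simp add: field_simps power2_eq_square)
  have nRx: "cmod (R - x^2) \<le> 2 * r^2"
    using norm_triangle_ineq4[of R "x^2"] cr xr by (simp add: norm_power)
  have "cmod (P2 x - x - Yfield x) = 2 * cmod (R - x^2) * cmod (2*x + 1) / (r^2 * cmod (R + 2*x + 1))"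
  proof -
    have "cmod (2*x^2 - 2*R) = cmod (2 * (x^2 - R))" by (simp add: algebra_simps)
    also have "\<dots> = 2 * cmod (x^2 - R)" by (simp only: norm_mult) simp
    also have "\<dots> = 2 * cmod (R - x^2)" by (simp only: norm_minus_commute)
    finally have h: "cmod (2*x^2 - 2*R) = 2 * cmod (R - x^2)" .
    show ?thesis unfolding E by (simp add: norm_mult norm_divide cr h)
  qed
  also have "\<dots> \<le> 2 * (2 * r^2) * (3 * r) / (r^2 * (r^2/2))"
    using nRx n21' dlow dpos r5
    by (intro frac_le mult_mono mult_left_mono) auto
  also have "\<dots> = 24 / r" using r5 by (simp add: field_simps power2_eq_square)
  finally show ?thesis .
qed
theorem corollary4p12:
  shows "\<exists>C R. \<forall>r. r \<ge> R \<and> r > 1 \<longrightarrow>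
           (\<forall>x::complex. cmod x = r \<longrightarrow> cmod (P2 x - x - Yfield x) \<le> C / r)"
  by (rule exI[of _ 24], rule exI[of _ 5]) (auto intro: main_bound)

end
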